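(* Let $\alpha>0$, $\nu:=\nu(\alpha)$, and let $(a_n)_{n\ge1}$ be a sequence of positive reals. Define $(\chi_t)_{t\ge1}$ inductively by $$\chi_t:=\max\Big\{a_t,\ \tfrac{t-1}{\alpha}\chi_1,\ \tfrac{t-2}{\alpha}\chi_2,\ \dots,\ \tfrac1\alpha\chi_{t-1}\Big\}$$ (so $\chi_1=a_1$). If $\lim_{n\to\infty}a_ne^{-\nu n}=0$, then there are constants $0<c'\le c<\infty$ such that $c'e^{\nu t}\le\chi_t\le ce^{\nu t}$ for all $t\ge1$; consequently $\lim_{t\to\infty}\frac{\log\chi_t}{t}=\nu$.
   Context: For $\alpha>0$, let $T=T(\alpha)\in\mathbb N$ be the unique positive integer with $\frac{(T-1)^T}{T^{T-1}}<\alpha\le\frac{T^{T+1}}{(T+1)^T}$, and define $\nu(\alpha):=\frac1T\log\frac T\alpha$. *)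

theory Defs
  imports "HOL-Analysis.Analysis"
begin

definition T_of :: "real \<Rightarrow> nat" where
  "T_of \<alpha> = (THE T::nat. T \<ge> 1 \<and>
      real (T - 1) ^ T / real T ^ (T - 1) < \<alpha> \<and>
      \<alpha> \<le> real T ^ (T + 1) / real (T + 1) ^ T)"

definition nu :: "real \<Rightarrow> real" where
  "nu \<alpha> = (1 / real (T_of \<alpha>)) * ln (real (T_of \<alpha>) / \<alpha>)"

function chi :: "(nat \<Rightarrow> real) \<Rightarrow> real \<Rightarrow> nat \<Rightarrow> real" where
  "chi a \<alpha> t = (if t \<le> 1 then a t
     else max (a t) (Max ((\<lambda>k. real (t - k) / \<alpha> * chi a \<alpha> k) ` {1..<t})))"
  by auto
termination by (relation "Wellfounded.measure (\<lambda>(a, \<alpha>, t). t)") auto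

end

theory Submission
  imports Defs
begin

definition ff :: "nat \<Rightarrow> real" where
  "ff n = real n ^ Suc n / real (Suc n) ^ n"

lemma ff_step: "ff n < ff (Suc n)"
proof -
  have p1: "(0::real) < real (Suc n) ^ n" "(0::real) < real (Suc (Suc n)) ^ Suc n" by auto
  have "(real n * real (n+2)) ^ Suc n < (real (Suc n) ^ 2) ^ Suc n"
    by (rule power_strict_mono) (auto simp: power2_eq_square algebra_simps)
  moreover have "real n ^ Suc n * real (Suc (Suc n)) ^ Suc n = (real n * real (n+2)) ^ Suc n"
    by (simp add: power_mult_distrib)
  moreover have "real (Suc n) ^ Suc (Suc n) * real (Suc n) ^ n = real (Suc n) ^ (Suc (Suc n) + n)"
    by (simp add: power_add)
  moreover have "Suc (Suc n) + n = 2 * Suc n" by simp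
  ultimately have "real n ^ Suc n * real (Suc (Suc n)) ^ Suc n < real (Suc n) ^ Suc (Suc n) * real (Suc n) ^ n"
    by (simp only: power_mult)
  thus ?thesis using p1 unfolding ff_def by (simp add: divide_simps)
qed

lemma ff_mono: "strict_mono ff"
  by (rule strict_monoI_Suc) (rule ff_step)

lemma ff_0: "ff 0 = 0" by (simp add: ff_def)

lemma ff_big: "n \<ge> 1 \<Longrightarrow> real n / exp 1 \<le> ff n"
proof -
  assume n: "n \<ge> 1"
  have "(1 + 1 / real n) ^ n \<le> exp (1/real n) ^ n"
    by (rule power_mono) (auto simp: add_pos_nonneg)
  also have "\<dots> = exp 1" using n by (simp add: exp_of_nat_mult[symmetric])
  finally have e: "(1 + 1 / real n) ^ n \<le> exp 1" .
  have "1 + 1 / real n = real (Suc n) / real n" using n by (simp add: field_simps)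
  hence "(1 + 1 / real n) ^ n = real (Suc n) ^ n / real n ^ n"
    by (simp add: power_divide)
  with e have "real (Suc n) ^ n / real n ^ n \<le> exp 1" by simp
  moreover have pn: "real n ^ n > 0" using n by simp
  ultimately have "real (Suc n) ^ n \<le> exp 1 * real n ^ n" by (simp add: pos_divide_le_eq)
  hence "real n * real (Suc n) ^ n \<le> real n * (exp 1 * real n ^ n)"
    by (rule mult_left_mono) simp
  hence "real n * real (Suc n) ^ n \<le> real n ^ Suc n * exp 1"
    by (simp add: algebra_simps)
  moreover have "real (Suc n) ^ n > 0" by simp
  ultimately show ?thesis unfolding ff_def
    by (simp add: pos_divide_le_eq pos_le_divide_eq mult.commute)
qed

lemma T_ex1: assumes "\<alpha> > 0"
  shows "\<exists>!T::nat. T \<ge> 1 \<and>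
      real (T - 1) ^ T / real T ^ (T - 1) < \<alpha> \<and>
      \<alpha> \<le> real T ^ (T + 1) / real (T + 1) ^ T"
proof -
  have eq: "(T \<ge> 1 \<and> real (T - 1) ^ T / real T ^ (T - 1) < \<alpha> \<and>
      \<alpha> \<le> real T ^ (T + 1) / real (T + 1) ^ T) \<longleftrightarrow> (\<exists>S. T = Suc S \<and> ff S < \<alpha> \<and> \<alpha> \<le> ff (Suc S))" for T
    by (cases T) (auto simp: ff_def)
  obtain N where N: "\<alpha> \<le> ff N"
  proof -
    obtain n::nat where "\<alpha> * exp 1 \<le> real n" using real_arch_simple by blast
    moreover have "\<alpha> * exp 1 > 0" using assms by simp
    ultimately have "n \<ge> 1" by (cases n) auto
    have "\<alpha> \<le> real n / exp 1" using \<open>\<alpha> * exp 1 \<le> real n\<close> by (simp add: divide_simps)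
    with ff_big[OF \<open>n\<ge>1\<close>] have "\<alpha> \<le> ff n" by linarith
    thus ?thesis by (rule that)
  qed
  define M where "M = (LEAST n. \<alpha> \<le> ff n)"
  have M1: "\<alpha> \<le> ff M" unfolding M_def by (rule LeastI[of "\<lambda>n. \<alpha> \<le> ff n", OF N])
  have "M \<noteq> 0" proof assume "M = 0" thus False using M1 ff_0 assms by simp qed
  then obtain S where S: "M = Suc S" by (cases M) auto
  have "\<not> \<alpha> \<le> ff S" unfolding M_def[symmetric] using not_less_Least[of S "\<lambda>n. \<alpha> \<le> ff n"] S M_def by auto
  hence ex: "ff S < \<alpha> \<and> \<alpha> \<le> ff (Suc S)" using M1 S by auto
  have uniq: "S' = S" if "ff S' < \<alpha> \<and> \<alpha> \<le> ff (Suc S')" for S'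
  proof (rule ccontr)
    assume "S' \<noteq> S"
    then consider "S' < S" | "S < S'" by linarith
    thus False
    proof cases
      case 1 hence "ff (Suc S') \<le> ff S" using ff_mono by (simp add: strict_mono_less_eq)
      thus False using that ex by auto
    next
      case 2 hence "ff (Suc S) \<le> ff S'" using ff_mono by (simp add: strict_mono_less_eq)
      thus False using that ex by auto
    qed
  qed
  show ?thesis unfolding eq using ex uniq by blast
qed


lemma key:
  assumes ap: "\<alpha> > 0"
  shows "T_of \<alpha> \<ge> 1" "real (T_of \<alpha>) = \<alpha> * exp (nu \<alpha> * real (T_of \<alpha>))"
    "\<And>m. m \<ge> 1 \<Longrightarrow> real m \<le> \<alpha> * exp (nu \<alpha> * real m)"
proof -
  define T where "T = T_of \<alpha>"
  have P: "T \<ge> 1 \<and> real (T - 1) ^ T / real T ^ (T - 1) < \<alpha> \<and>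
      \<alpha> \<le> real T ^ (T + 1) / real (T + 1) ^ T"
    unfolding T_def T_of_def by (rule theI'[OF T_ex1[OF ap]])
  hence T1: "T \<ge> 1" and h1: "real (T - 1) ^ T / real T ^ (T - 1) < \<alpha>"
    and h2: "\<alpha> \<le> real T ^ (T + 1) / real (T + 1) ^ T" by auto
  show "T_of \<alpha> \<ge> 1" using T1 T_def by simp
  define x where "x = exp (nu \<alpha>)"
  have xpos: "x > 0" unfolding x_def by simp
  have xp: "exp (nu \<alpha> * real m) = x ^ m" for m
    unfolding x_def by (simp add: exp_of_nat_mult[symmetric] mult.commute)
  have Tpos: "real T > 0" using T1 by simp
  have "x ^ T = exp (real T * nu \<alpha>)" using xp[of T] by (simp add: mult.commute)
  also have "real T * nu \<alpha> = ln (real T / \<alpha>)" unfolding nu_def T_def[symmetric] using Tpos by simp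
  also have "exp (ln (real T / \<alpha>)) = real T / \<alpha>" using Tpos ap by simp
  finally have xT: "\<alpha> * x ^ T = real T" using ap by simp
  show "real (T_of \<alpha>) = \<alpha> * exp (nu \<alpha> * real (T_of \<alpha>))"
    using xT xp[of T] T_def by simp
  have hup: "real T + 1 \<le> real T * x"
  proof -
    have pos: "0 < real (T + 1) ^ T" by simp
    have "\<alpha> * real (T + 1) ^ T \<le> real T ^ (T + 1)"
      using iffD1[OF pos_le_divide_eq[OF pos] h2] .
    hence "\<alpha> * real (T + 1) ^ T * x ^ T \<le> real T ^ (T + 1) * x ^ T"
      using xpos by (simp add: mult_right_mono)
    have "real T * real (T + 1) ^ T = (\<alpha> * x ^ T) * real (T + 1) ^ T" using xT by simp
    also have "\<dots> = \<alpha> * real (T + 1) ^ T * x ^ T" by (simp only: mult_ac)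
    also have "\<dots> \<le> real T ^ (T + 1) * x ^ T" by fact
    also have "\<dots> = real T * (real T * x) ^ T" by (simp add: power_mult_distrib)
    finally have "real T * real (T + 1) ^ T \<le> real T * (real T * x) ^ T" .
    hence "real (T + 1) ^ T \<le> (real T * x) ^ T" using Tpos by simp
    moreover obtain S where "T = Suc S" using T1 by (cases T) auto
    ultimately have "real (T + 1) ^ Suc S \<le> (real T * x) ^ Suc S" by simp
    hence "real (T + 1) \<le> real T * x" by (rule power_le_imp_le_base) (use xpos Tpos in simp)
    thus ?thesis by simp
  qed
  have hlow: "(real T - 1) * x \<le> real T" if T2: "T \<ge> 2"
  proof -
    have pos: "0 < real T ^ (T - 1)" using Tpos by simp
    have "real (T - 1) ^ T < \<alpha> * real T ^ (T - 1)"
      using iffD1[OF pos_divide_less_eq[OF pos] h1] .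
    hence "real (T - 1) ^ T * x ^ T < \<alpha> * real T ^ (T - 1) * x ^ T"
      by (rule mult_strict_right_mono) (use xpos in simp)
    also have "\<alpha> * real T ^ (T - 1) * x ^ T = real T ^ (T - 1) * (\<alpha> * x ^ T)"
      by (simp only: mult_ac)
    also have "\<dots> = real T ^ (T - 1) * real T" by (simp only: xT)
    also have "\<dots> = real T ^ T" using T1 power_minus_mult[of T "real T"] by simp
    finally have "(real (T - 1) * x) ^ T < real T ^ T" by (simp only: power_mult_distrib)
    hence "real (T - 1) * x < real T" by (rule power_less_imp_less_base) simp
    thus ?thesis using T1 by (simp add: of_nat_diff)
  qed
  have up: "real m \<le> \<alpha> * x ^ m" if "m \<ge> T" for m
    using that
  proof (induction m rule: nat_induct_at_least)
    case base thus ?case using xT by simp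
  next
    case (Suc m)
    have "real m * (real T + 1) \<le> real m * (real T * x)"
      using hup by (rule mult_left_mono) simp
    moreover have "real T * (real m + 1) \<le> real m * (real T + 1)"
      using Suc.hyps by (simp add: algebra_simps)
    ultimately have "real T * (real m + 1) \<le> real T * (real m * x)" by (simp add: algebra_simps)
    hence "real m + 1 \<le> real m * x" using Tpos by simp
    also have "real m * x \<le> \<alpha> * x ^ m * x" using Suc.IH xpos by (simp add: mult_right_mono)
    finally show ?case by (simp add: algebra_simps)
  qed
  have down: "real (T - d) \<le> \<alpha> * x ^ (T - d)" if "d \<le> T - 1" for d
    using that
  proof (induction d)
    case 0 thus ?case using xT by simp
  next
    case (Suc d)
    define m where "m = T - Suc d"
    have m1: "m \<ge> 1" "m + 1 = T - d" "m \<le> T - 1" "T \<ge> 2" using Suc.prems by (auto simp: m_def)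
    have IH: "real (m + 1) \<le> \<alpha> * x ^ (m + 1)" using Suc m1 by simp
    have Tm: "real m \<le> real T - 1" using m1 by linarith
    have "real m * ((real T - 1) * x) \<le> real m * real T"
      using hlow[OF m1(4)] by (rule mult_left_mono) simp
    also have "\<dots> \<le> (real m + 1) * (real T - 1)" using Tm by (simp add: algebra_simps)
    finally have "(real T - 1) * (real m * x) \<le> (real T - 1) * (real m + 1)"
      by (simp add: algebra_simps)
    hence "real m * x \<le> real m + 1" using m1(4) by simp
    also have "\<dots> \<le> (\<alpha> * x ^ m) * x" using IH by (simp add: algebra_simps)
    finally have "real m \<le> \<alpha> * x ^ m" using xpos by simp
    thus ?case by (simp add: m_def)
  qed
  fix m :: nat assume "m \<ge> 1"
  show "real m \<le> \<alpha> * exp (nu \<alpha> * real m)"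
  proof (cases "m \<ge> T")
    case True thus ?thesis using up xp by simp
  next
    case False
    hence "T - (T - m) = m" "T - m \<le> T - 1" using \<open>m \<ge> 1\<close> by auto
    thus ?thesis using down[of "T - m"] xp by simp
  qed
qed


declare chi.simps[simp del]

lemma chi_le1: "t \<le> 1 \<Longrightarrow> chi a \<alpha> t = a t"
  by (subst chi.simps) simp

lemma chi_ge2: "t \<ge> 2 \<Longrightarrow> chi a \<alpha> t = max (a t) (Max ((\<lambda>k. real (t - k) / \<alpha> * chi a \<alpha> k) ` {1..<t}))"
  by (subst chi.simps) simp

lemma chi_ge_a: "t \<ge> 1 \<Longrightarrow> a t \<le> chi a \<alpha> t"
proof (cases "t \<ge> 2")
  case True thus ?thesis by (simp add: chi_ge2)
next
  case False thus ?thesis by (simp add: chi_le1)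
qed

lemma chi_ge_k: assumes "1 \<le> k" "k < t"
  shows "real (t - k) / \<alpha> * chi a \<alpha> k \<le> chi a \<alpha> t"
proof -
  have t2: "t \<ge> 2" using assms by simp
  have "real (t - k) / \<alpha> * chi a \<alpha> k \<le> Max ((\<lambda>k. real (t - k) / \<alpha> * chi a \<alpha> k) ` {1..<t})"
    by (rule Max_ge) (use assms in auto)
  thus ?thesis using chi_ge2[OF t2, of a \<alpha>] by simp
qed

lemma chi_le_bound: assumes "t \<ge> 2" "a t \<le> B"
  "\<And>k. 1 \<le> k \<Longrightarrow> k < t \<Longrightarrow> real (t - k) / \<alpha> * chi a \<alpha> k \<le> B"
  shows "chi a \<alpha> t \<le> B"
proof -
  have "Max ((\<lambda>k. real (t - k) / \<alpha> * chi a \<alpha> k) ` {1..<t}) \<le> B"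
    using assms(1,3) by (subst Max_le_iff) auto
  thus ?thesis using assms(2) chi_ge2[OF assms(1), of a \<alpha>] by simp
qed

theorem lemma4:
  fixes \<alpha> :: real and a :: "nat \<Rightarrow> real"
  assumes "\<alpha> > 0"
    and "\<And>n. n \<ge> 1 \<Longrightarrow> a n > 0"
    and "((\<lambda>n. a n * exp (- nu \<alpha> * real n)) \<longlongrightarrow> 0) sequentially"
  shows "(\<exists>c' c. 0 < c' \<and> c' \<le> c \<and>
           (\<forall>t\<ge>1. c' * exp (nu \<alpha> * real t) \<le> chi a \<alpha> t \<and>
                   chi a \<alpha> t \<le> c * exp (nu \<alpha> * real t)))
       \<and> ((\<lambda>t. ln (chi a \<alpha> t) / real t) \<longlongrightarrow> nu \<alpha>) sequentially"
proof -
  define v where "v = nu \<alpha>"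
  define T where "T = T_of \<alpha>"
  define E where "E t = exp (v * real t)" for t :: nat
  have Epos: "E t > 0" for t unfolding E_def by simp
  have Eadd: "E (k + m) = E k * E m" for k m unfolding E_def by (simp add: algebra_simps exp_add)
  have T1: "T \<ge> 1" using key(1)[OF assms(1)] T_def by simp
  have TE: "real T = \<alpha> * E T" using key(2)[OF assms(1)] T_def E_def v_def by simp
  have mE: "real m \<le> \<alpha> * E m" if "m \<ge> 1" for m using key(3)[OF assms(1) that] E_def v_def by simp
  have chipos: "chi a \<alpha> t > 0" if "t \<ge> 1" for t
    using chi_ge_a[OF that, of a \<alpha>] assms(2)[OF that] by simp
  define c' where "c' = Min ((\<lambda>t. chi a \<alpha> t / E t) ` {1..T})"
  have c'pos: "c' > 0" unfolding c'_def using T1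
    by (subst Min_gr_iff) (auto intro!: divide_pos_pos chipos Epos)
  have low: "c' * E t \<le> chi a \<alpha> t" if "t \<ge> 1" for t
    using that
  proof (induction t rule: less_induct)
    case (less t)
    show ?case
    proof (cases "t \<le> T")
      case True
      have "c' \<le> chi a \<alpha> t / E t" unfolding c'_def
        by (rule Min_le) (use True less.prems in auto)
      thus ?thesis using Epos[of t] by (simp add: pos_le_divide_eq)
    next
      case False
      define k where "k = t - T"
      have k: "1 \<le> k" "k < t" "t - k = T" "t = T + k" using False T1 by (auto simp: k_def)
      have IH: "c' * E k \<le> chi a \<alpha> k" using less.IH[OF k(2) k(1)] .
      have "c' * E t = E T * (c' * E k)" using k(4) Eadd[of T k] by simp
      also have "\<dots> \<le> E T * chi a \<alpha> k" using IH Epos[of T] by simp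
      also have "E T = real (t - k) / \<alpha>" using TE k(3) assms(1) by simp
      also have "real (t - k) / \<alpha> * chi a \<alpha> k \<le> chi a \<alpha> t" by (rule chi_ge_k[OF k(1,2)])
      finally show ?thesis .
    qed
  qed
  have "Bseq (\<lambda>n. a n * exp (- nu \<alpha> * real n))"
    using assms(3) by (rule convergent_imp_Bseq[OF convergentI])
  then obtain K where K: "K > 0" "\<And>n. norm (a n * exp (- nu \<alpha> * real n)) \<le> K"
    unfolding Bseq_def by blast
  have aK: "a n \<le> K * E n" for n
  proof -
    have "a n * exp (- v * real n) \<le> K" using K(2)[of n] v_def by simp
    hence "a n * exp (- v * real n) * E n \<le> K * E n" using Epos[of n] by (simp add: mult_right_mono)
    moreover have "exp (- v * real n) * E n = 1" unfolding E_def by (simp add: exp_minus_inverse[symmetric] exp_add[symmetric])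
    ultimately show ?thesis by (simp add: mult.assoc)
  qed
  define c where "c = max K c'"
  have cpos: "c > 0" using K(1) c_def by simp
  have up: "chi a \<alpha> t \<le> c * E t" if "t \<ge> 1" for t
    using that
  proof (induction t rule: less_induct)
    case (less t)
    have at: "a t \<le> c * E t"
      using aK[of t] Epos[of t] c_def by (smt (verit) mult_right_mono max.cobounded1)
    show ?case
    proof (cases "t \<ge> 2")
      case False
      thus ?thesis using at chi_le1[of t a \<alpha>] by simp
    next
      case True
      show ?thesis
      proof (rule chi_le_bound[of t a "c * E t" \<alpha>, OF True at])
        fix k assume k: "1 \<le> k" "k < t"
        have IH: "chi a \<alpha> k \<le> c * E k" using less.IH[OF k(2) k(1)] .
        have tk: "real (t - k) / \<alpha> \<le> E (t - k)"
          using mE[of "t - k"] k assms(1) by (simp add: pos_divide_le_eq mult.commute)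
        have "real (t - k) / \<alpha> * chi a \<alpha> k \<le> real (t - k) / \<alpha> * (c * E k)"
          using IH assms(1) by (intro mult_left_mono) auto
        also have "\<dots> \<le> E (t - k) * (c * E k)"
          using tk cpos Epos[of k] by (intro mult_right_mono) auto
        also have "\<dots> = c * E t" using Eadd[of "t - k" k] k by (simp add: algebra_simps)
        finally show "real (t - k) / \<alpha> * chi a \<alpha> k \<le> c * E t" .
      qed
    qed
  qed
  have part1: "\<exists>c' c. 0 < c' \<and> c' \<le> c \<and>
           (\<forall>t\<ge>1. c' * exp (nu \<alpha> * real t) \<le> chi a \<alpha> t \<and>
                   chi a \<alpha> t \<le> c * exp (nu \<alpha> * real t))"
    using c'pos low up c_def unfolding E_def v_def by (intro exI[of _ c'] exI[of _ c]) auto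
  have lnE: "ln (d * E t) = ln d + v * real t" if "d > 0" for d t
    using that Epos[of t] by (simp add: ln_mult E_def)
  have ev1: "\<forall>\<^sub>F t in sequentially. ln c' / real t + v \<le> ln (chi a \<alpha> t) / real t"
    using eventually_ge_at_top[of 1]
  proof eventually_elim
    case (elim t)
    have "ln (c' * E t) \<le> ln (chi a \<alpha> t)"
      using low[OF elim] c'pos Epos[of t] by (simp add: ln_mono)
    hence "ln c' + v * real t \<le> ln (chi a \<alpha> t)" using lnE[OF c'pos] by simp
    hence "(ln c' + v * real t) / real t \<le> ln (chi a \<alpha> t) / real t"
      using elim by (simp add: divide_right_mono)
    thus ?case using elim by (simp add: add_divide_distrib)
  qed
  have ev2: "\<forall>\<^sub>F t in sequentially. ln (chi a \<alpha> t) / real t \<le> ln c / real t + v"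
    using eventually_ge_at_top[of 1]
  proof eventually_elim
    case (elim t)
    have "ln (chi a \<alpha> t) \<le> ln (c * E t)"
      using up[OF elim] chipos[OF elim] by (simp add: ln_mono)
    hence "ln (chi a \<alpha> t) \<le> ln c + v * real t" using lnE[OF cpos] by simp
    hence "ln (chi a \<alpha> t) / real t \<le> (ln c + v * real t) / real t"
      using elim by (simp add: divide_right_mono)
    thus ?case using elim by (simp add: add_divide_distrib)
  qed
  have l1: "(\<lambda>t. ln c' / real t + v) \<longlonglongrightarrow> v"
    using tendsto_add[OF lim_const_over_n[of "ln c'"] tendsto_const[of v]] by simp
  have l2: "(\<lambda>t. ln c / real t + v) \<longlonglongrightarrow> v"
    using tendsto_add[OF lim_const_over_n[of "ln c"] tendsto_const[of v]] by simp
  have "(\<lambda>t. ln (chi a \<alpha> t) / real t) \<longlonglongrightarrow> v"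
    by (rule tendsto_sandwich[OF ev1 ev2 l1 l2])
  thus ?thesis using part1 v_def by simp
qed

end
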